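(* Consider the following cutting-plane algorithm for $\min_{\mathbf{x}\in\mathcal{X}}\Phi_R(\mathbf{x})$ with tolerance $\epsilon\ge0$. Initialize $L=1$, $\theta^{lb}=-\infty$, $\theta^{ub}=+\infty$, and pick $\hat{\mathbf{x}}^1\in\mathcal{X}$; the cut set is initially empty. While $\theta^{ub}-\theta^{lb}>\epsilon$: set $\hat{\mathbf x}=\hat{\mathbf x}^L$; for each $\omega\in\Omega$ compute an optimal solution $\hat{\mathbf S}^\omega$ of the problem defining $Q_\omega(\hat{\mathbf x})$; compute $(\hat p_\omega)\in\arg\min_{P\in\mathfrak P}\sum_\omega p_\omega f^\omega(\hat{\mathbf S}^\omega)$ and $\Phi_R(\hat{\mathbf x})=\sum_\omega\hat p_\omega f^\omega(\hat{\mathbf S}^\omega)$; if $\Phi_R(\hat{\mathbf x})<\theta^{ub}$ set $\theta^{ub}=\Phi_R(\hat{\mathbf x})$ and $\mathbf x^*=\hat{\mathbf x}$; add the cut $\eta\ge\Phi_R(\hat{\mathbf x})-\sum_{q=1}^k\sum_{i\in N}c_{q,i}(\hat{\mathbf x})x_{q,i}$ with $c_{q,i}(\hat{\mathbf x})=\max_{P\in\mathfrak P}\sum_\omega p_\omega\rho^\omega_{q,i}(\boldsymbol\emptyset)\hat y^\omega_{q,i}\xi^\omega_i$; solve the master problem $\min\{\eta:\mathbf x\in\mathcal X,\ \eta\in\mathbb R,\ (\eta,\mathbf x)\text{ satisfies all cuts added so far}\}$ exactly, obtaining $(\eta^{L+1},\hat{\mathbf x}^{L+1})$; set $\theta^{lb}=\eta^{L+1}$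 and $L\leftarrow L+1$. Assuming every subproblem (each $Q_\omega$, each optimization over $\mathfrak P$, and each master problem) is solved exactly, the algorithm terminates after finitely many iterations, and upon termination $\theta^{ub}=\Phi_R(\mathbf x^* )\le\min_{\mathbf x\in\mathcal X}\Phi_R(\mathbf x)+\epsilon$; in particular, with $\epsilon=0$ it returns a globally optimal solution $\mathbf x^*$ of $\min_{\mathbf x\in\mathcal X}\Phi_R(\mathbf x)$.
   Context: Let $n,k$ be positive integers, $N=\{1,\dots,n\}$, and $\mathbb{X}(N,k)$ the set of $k$-tuples $\mathbf{S}=(S_1,\dots,S_k)$ of pairwise disjoint subsets of $N$, identified with $\mathbf{s}\in\{0,1\}^{kn}$ via $s_{q,i}=1$ iff $i\in S_q$. A function $f:\mathbb{X}(N,k)\to\mathbb{R}$ is $k$-submodular if $f(\mathbf{X})+f(\mathbf{Y})\ge f(\mathbf{X}\sqcap\mathbf{Y})+f(\mathbf{X}\sqcup\mathbf{Y})$, where $\mathbf{X}\sqcap\mathbf{Y}=(X_q\cap Y_q)_q$ and the $i$-th component of $\mathbf{X}\sqcup\mathbf{Y}$ is $(X_i\cup Y_i)\setminus\bigcup_{q\ne i}(X_q\cup Y_q)$; monotone if $f(\mathbf X)\le f(\mathbf Y)$ whenever $X_q\subseteq Y_q$ for all $q$. $\Omega$ is a finite scenario set; for each $\omega$ we have $\xi^\omega\in\{0,1\}^n$ and a monotone $k$-submodular $f^\omega$ with marginal gains $\rho^\omega_{q,i}(\mathbf{X})=f^\omega(X_1,\dots,X_q\cup\{i\},\dots,X_k)-f^\omega(\mathbf{X})$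 for $i\notin\bigcup_rX_r$; $\boldsymbol\emptyset=(\emptyset,\dots,\emptyset)$. With nonnegative integer budgets $A_q,D_q$: $\mathcal{X}=\{\mathbf{x}\in\{0,1\}^{kn}:\sum_i x_{q,i}\le A_q\ \forall q,\ \sum_q x_{q,i}\le1\ \forall i\}$; $Q_\omega(\mathbf x)=\max\{f^\omega(\mathbf S):\mathbf S\in\mathbb X(N,k),\ s_{q,i}\le1-x_{q,i}\xi^\omega_i\ \forall q,i,\ \sum_i s_{q,i}\le D_q\ \forall q\}$. $\mathfrak P$ is a nonempty compact set of probability distributions $(p_\omega)_{\omega\in\Omega}$, and $\Phi_R(\mathbf x)=\min_{P\in\mathfrak P}\sum_\omega p_\omega Q_\omega(\mathbf x)$. $\hat y^\omega_{q,i}=1$ if $i\in\hat S^\omega_q$ and $0$ otherwise. *)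

theory Defs
  imports "HOL-Analysis.Analysis"
begin

text \<open>The 0/1 vector s is s_{q,i} = 1 iff i \<in> S q.\<close>

definition kset :: "nat \<Rightarrow> nat \<Rightarrow> (nat \<Rightarrow> nat set) set" where
  "kset n k = {S. (\<forall>q. S q \<subseteq> (if q \<in> {1..k} then {1..n} else {})) \<and>
                  (\<forall>q r. q \<noteq> r \<longrightarrow> S q \<inter> S r = {})}"

definition kinf :: "(nat \<Rightarrow> nat set) \<Rightarrow> (nat \<Rightarrow> nat set) \<Rightarrow> (nat \<Rightarrow> nat set)" where
  "kinf X Y = (\<lambda>q. X q \<inter> Y q)"

definition ksup :: "nat \<Rightarrow> (nat \<Rightarrow> nat set) \<Rightarrow> (nat \<Rightarrow> nat set) \<Rightarrow> (nat \<Rightarrow> nat set)" where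
  "ksup k X Y = (\<lambda>q. if q \<in> {1..k}
       then (X q \<union> Y q) - (\<Union>r\<in>{1..k} - {q}. X r \<union> Y r) else {})"

definition k_submodular :: "nat \<Rightarrow> nat \<Rightarrow> ((nat \<Rightarrow> nat set) \<Rightarrow> real) \<Rightarrow> bool" where
  "k_submodular n k f \<longleftrightarrow> (\<forall>X\<in>kset n k. \<forall>Y\<in>kset n k.
       f X + f Y \<ge> f (kinf X Y) + f (ksup k X Y))"

definition k_monotone :: "nat \<Rightarrow> nat \<Rightarrow> ((nat \<Rightarrow> nat set) \<Rightarrow> real) \<Rightarrow> bool" where
  "k_monotone n k f \<longleftrightarrow> (\<forall>X\<in>kset n k. \<forall>Y\<in>kset n k.
       (\<forall>q. X q \<subseteq> Y q) \<longrightarrow> f X \<le> f Y)"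

definition empty_tuple :: "nat \<Rightarrow> nat set" where
  "empty_tuple = (\<lambda>q. {})"

definition rho :: "((nat \<Rightarrow> nat set) \<Rightarrow> real) \<Rightarrow> nat \<Rightarrow> nat \<Rightarrow> (nat \<Rightarrow> nat set) \<Rightarrow> real" where
  "rho f q i X = f (X(q := X q \<union> {i})) - f X"

text \<open>The first-stage feasible set \<X> (x identified with a k-tuple X of disjoint sets)\<close>
definition Xset :: "nat \<Rightarrow> nat \<Rightarrow> (nat \<Rightarrow> nat) \<Rightarrow> (nat \<Rightarrow> nat set) set" where
  "Xset n k A = {X \<in> kset n k. \<forall>q\<in>{1..k}. card (X q) \<le> A q}"

text \<open>Feasible set of the subproblem defining Q_omega(x); xi :: nat => bool is xi^omega\<close>
definition Qfeas :: "nat \<Rightarrow> nat \<Rightarrow> (nat \<Rightarrow> nat) \<Rightarrow> (nat \<Rightarrow> bool) \<Rightarrow> (nat \<Rightarrow> nat set)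
     \<Rightarrow> (nat \<Rightarrow> nat set) set" where
  "Qfeas n k D xi X = {S \<in> kset n k.
      (\<forall>q\<in>{1..k}. \<forall>i\<in>{1..n}. i \<in> S q \<longrightarrow> \<not> (i \<in> X q \<and> xi i)) \<and>
      (\<forall>q\<in>{1..k}. card (S q) \<le> D q)}"

definition Qval :: "nat \<Rightarrow> nat \<Rightarrow> (nat \<Rightarrow> nat) \<Rightarrow> (nat \<Rightarrow> bool) \<Rightarrow> ((nat \<Rightarrow> nat set) \<Rightarrow> real)
     \<Rightarrow> (nat \<Rightarrow> nat set) \<Rightarrow> real" where
  "Qval n k D xi f X = Max (f ` Qfeas n k D xi X)"

definition prob_dists :: "('w::finite \<Rightarrow> real) set" where
  "prob_dists = {p. (\<forall>w. 0 \<le> p w) \<and> sum p UNIV = 1}"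

definition PhiR :: "nat \<Rightarrow> nat \<Rightarrow> (nat \<Rightarrow> nat) \<Rightarrow> ('w::finite \<Rightarrow> nat \<Rightarrow> bool)
     \<Rightarrow> ('w \<Rightarrow> (nat \<Rightarrow> nat set) \<Rightarrow> real) \<Rightarrow> ('w \<Rightarrow> real) set \<Rightarrow> (nat \<Rightarrow> nat set) \<Rightarrow> real" where
  "PhiR n k D xi f PP X = (INF p\<in>PP. \<Sum>w\<in>UNIV. p w * Qval n k D (xi w) (f w) X)"

text \<open>A run is described by: xh L = x-hat^L (L \<ge> 1), Sh L w = S-hat^w computed in
  iteration L, ph L = p-hat computed in iteration L, eta L = eta^{L+1} computed
  by the master problem in iteration L.\<close>

definition Phival :: "('w::finite \<Rightarrow> (nat \<Rightarrow> nat set) \<Rightarrow> real) \<Rightarrow> (nat \<Rightarrow> 'w \<Rightarrow> real)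
     \<Rightarrow> (nat \<Rightarrow> 'w \<Rightarrow> nat \<Rightarrow> nat set) \<Rightarrow> nat \<Rightarrow> real" where
  "Phival f ph Sh L = (\<Sum>w\<in>UNIV. ph L w * f w (Sh L w))"

text \<open>theta^ub, x^* and theta^lb after m completed iterations\<close>
fun theta_ub :: "('w::finite \<Rightarrow> (nat \<Rightarrow> nat set) \<Rightarrow> real) \<Rightarrow> (nat \<Rightarrow> 'w \<Rightarrow> real)
     \<Rightarrow> (nat \<Rightarrow> 'w \<Rightarrow> nat \<Rightarrow> nat set) \<Rightarrow> nat \<Rightarrow> ereal" where
  "theta_ub f ph Sh 0 = \<infinity>"
| "theta_ub f ph Sh (Suc m) =
     (if ereal (Phival f ph Sh (Suc m)) < theta_ub f ph Sh m
      then ereal (Phival f ph Sh (Suc m)) else theta_ub f ph Sh m)"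

fun xstar :: "('w::finite \<Rightarrow> (nat \<Rightarrow> nat set) \<Rightarrow> real) \<Rightarrow> (nat \<Rightarrow> 'w \<Rightarrow> real)
     \<Rightarrow> (nat \<Rightarrow> 'w \<Rightarrow> nat \<Rightarrow> nat set) \<Rightarrow> (nat \<Rightarrow> nat \<Rightarrow> nat set) \<Rightarrow> nat \<Rightarrow> (nat \<Rightarrow> nat set)" where
  "xstar f ph Sh xh 0 = undefined"
| "xstar f ph Sh xh (Suc m) =
     (if ereal (Phival f ph Sh (Suc m)) < theta_ub f ph Sh m
      then xh (Suc m) else xstar f ph Sh xh m)"

fun theta_lb :: "(nat \<Rightarrow> real) \<Rightarrow> nat \<Rightarrow> ereal" where
  "theta_lb eta 0 = -\<infinity>"
| "theta_lb eta (Suc m) = ereal (eta (Suc m))"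

definition cutcoef :: "('w::finite \<Rightarrow> nat \<Rightarrow> bool) \<Rightarrow> ('w \<Rightarrow> (nat \<Rightarrow> nat set) \<Rightarrow> real)
     \<Rightarrow> ('w \<Rightarrow> real) set \<Rightarrow> (nat \<Rightarrow> 'w \<Rightarrow> nat \<Rightarrow> nat set) \<Rightarrow> nat \<Rightarrow> nat \<Rightarrow> nat \<Rightarrow> real" where
  "cutcoef xi f PP Sh j q i = (SUP p\<in>PP. \<Sum>w\<in>UNIV.
      p w * rho (f w) q i empty_tuple * (if i \<in> Sh j w q then 1 else 0) * (if xi w i then 1 else 0))"

definition cutval :: "nat \<Rightarrow> nat \<Rightarrow> ('w::finite \<Rightarrow> nat \<Rightarrow> bool) \<Rightarrow> ('w \<Rightarrow> (nat \<Rightarrow> nat set) \<Rightarrow> real)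
     \<Rightarrow> ('w \<Rightarrow> real) set \<Rightarrow> (nat \<Rightarrow> 'w \<Rightarrow> real) \<Rightarrow> (nat \<Rightarrow> 'w \<Rightarrow> nat \<Rightarrow> nat set)
     \<Rightarrow> nat \<Rightarrow> (nat \<Rightarrow> nat set) \<Rightarrow> real" where
  "cutval n k xi f PP ph Sh j X = Phival f ph Sh j -
     (\<Sum>q\<in>{1..k}. \<Sum>i\<in>{1..n}. cutcoef xi f PP Sh j q i * (if i \<in> X q then 1 else 0))"

definition iteration_ok :: "nat \<Rightarrow> nat \<Rightarrow> (nat \<Rightarrow> nat) \<Rightarrow> (nat \<Rightarrow> nat) \<Rightarrow> ('w::finite \<Rightarrow> nat \<Rightarrow> bool)
     \<Rightarrow> ('w \<Rightarrow> (nat \<Rightarrow> nat set) \<Rightarrow> real) \<Rightarrow> ('w \<Rightarrow> real) set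
     \<Rightarrow> (nat \<Rightarrow> nat \<Rightarrow> nat set) \<Rightarrow> (nat \<Rightarrow> 'w \<Rightarrow> nat \<Rightarrow> nat set) \<Rightarrow> (nat \<Rightarrow> 'w \<Rightarrow> real)
     \<Rightarrow> (nat \<Rightarrow> real) \<Rightarrow> nat \<Rightarrow> bool" where
  "iteration_ok n k A D xi f PP xh Sh ph eta L \<longleftrightarrow>
     (\<forall>w. Sh L w \<in> Qfeas n k D (xi w) (xh L) \<and>
          (\<forall>S\<in>Qfeas n k D (xi w) (xh L). f w S \<le> f w (Sh L w))) \<and>
     ph L \<in> PP \<and>
     (\<forall>p\<in>PP. (\<Sum>w\<in>UNIV. ph L w * f w (Sh L w)) \<le> (\<Sum>w\<in>UNIV. p w * f w (Sh L w))) \<and>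
     xh (Suc L) \<in> Xset n k A \<and>
     (\<forall>j\<in>{1..L}. cutval n k xi f PP ph Sh j (xh (Suc L)) \<le> eta L) \<and>
     (\<forall>X\<in>Xset n k A. \<forall>e::real. (\<forall>j\<in>{1..L}. cutval n k xi f PP ph Sh j X \<le> e) \<longrightarrow> eta L \<le> e)"

definition valid_run :: "nat \<Rightarrow> nat \<Rightarrow> (nat \<Rightarrow> nat) \<Rightarrow> (nat \<Rightarrow> nat) \<Rightarrow> ('w::finite \<Rightarrow> nat \<Rightarrow> bool)
     \<Rightarrow> ('w \<Rightarrow> (nat \<Rightarrow> nat set) \<Rightarrow> real) \<Rightarrow> ('w \<Rightarrow> real) set \<Rightarrow> real
     \<Rightarrow> (nat \<Rightarrow> nat \<Rightarrow> nat set) \<Rightarrow> (nat \<Rightarrow> 'w \<Rightarrow> nat \<Rightarrow> nat set) \<Rightarrow> (nat \<Rightarrow> 'w \<Rightarrow> real)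
     \<Rightarrow> (nat \<Rightarrow> real) \<Rightarrow> bool" where
  "valid_run n k A D xi f PP eps xh Sh ph eta \<longleftrightarrow>
     xh 1 \<in> Xset n k A \<and>
     (\<forall>m. (\<forall>m'\<le>m. theta_ub f ph Sh m' - theta_lb eta m' > ereal eps) \<longrightarrow>
          iteration_ok n k A D xi f PP xh Sh ph eta (Suc m))"

end

theory Submission
  imports Defs
begin

lemma kset_sub: "S \<in> kset n k \<Longrightarrow> S q \<subseteq> (if q \<in> {1..k} then {1..n} else {})"
  unfolding kset_def by blast

lemma kset_out: assumes "S \<in> kset n k" "q \<notin> {1..k}" shows "S q = {}"
  using kset_sub[OF assms(1), of q] unfolding if_not_P[OF assms(2)] by blast

lemma kset_in: assumes "S \<in> kset n k" "q \<in> {1..k}" shows "S q \<subseteq> {1..n}"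
  using kset_sub[OF assms(1), of q] unfolding if_P[OF assms(2)] .

lemma kset_disj: "S \<in> kset n k \<Longrightarrow> q \<noteq> r \<Longrightarrow> S q \<inter> S r = {}"
  unfolding kset_def by blast

lemma kset_intro:
  assumes "\<And>q. q \<in> {1..k} \<Longrightarrow> S q \<subseteq> {1..n}" "\<And>q. q \<notin> {1..k} \<Longrightarrow> S q = {}"
    "\<And>q r. q \<noteq> r \<Longrightarrow> S q \<inter> S r = {}"
  shows "S \<in> kset n k"
proof -
  have "S q \<subseteq> (if q \<in> {1..k} then {1..n} else {})" for q
  proof (cases "q \<in> {1..k}")
    case True then show ?thesis by (subst if_P[OF True]) (rule assms(1)[OF True])
  next
    case False then show ?thesis by (subst if_not_P[OF False]) (simp add: assms(2)[OF False])
  qed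
  then show ?thesis unfolding kset_def using assms(3) by blast
qed

lemma kset_mono: "T \<in> kset n k \<Longrightarrow> (\<And>q. S q \<subseteq> T q) \<Longrightarrow> S \<in> kset n k"
proof (rule kset_intro)
  fix q assume T: "T \<in> kset n k" and s: "\<And>q. S q \<subseteq> T q"
  show "q \<in> {1..k} \<Longrightarrow> S q \<subseteq> {1..n}" using kset_in[OF T, of q] s[of q] by blast
  show "q \<notin> {1..k} \<Longrightarrow> S q = {}" using kset_out[OF T, of q] s[of q] by blast
  fix r show "q \<noteq> r \<Longrightarrow> S q \<inter> S r = {}" using kset_disj[OF T, of q r] s[of q] s[of r] by blast
qed

lemma finite_kset: "finite (kset n k)"
proof -
  have inj: "inj_on (\<lambda>S. restrict S {1..k}) (kset n k)"
  proof (rule inj_onI)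
    fix S T assume S: "S \<in> kset n k" and T: "T \<in> kset n k" and e: "restrict S {1..k} = restrict T {1..k}"
    show "S = T"
    proof
      fix q show "S q = T q"
      proof (cases "q \<in> {1..k}")
        case True then show ?thesis using fun_cong[OF e, of q] by simp
      next
        case False then show ?thesis using kset_out[OF S False] kset_out[OF T False] by simp
      qed
    qed
  qed
  have "restrict S {1..k} \<in> PiE {1..k} (\<lambda>_. Pow {1..n})" if "S \<in> kset n k" for S
    using kset_in[OF that] by (simp add: PiE_iff)
  then have "(\<lambda>S. restrict S {1..k}) ` kset n k \<subseteq> PiE {1..k} (\<lambda>_. Pow {1..n})" by blast
  then have "finite ((\<lambda>S. restrict S {1..k}) ` kset n k)"
    by (rule finite_subset) (simp add: finite_PiE)
  then show ?thesis using finite_imageD inj by blast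
qed

lemma empty_kset: "empty_tuple \<in> kset n k"
  by (simp add: kset_def empty_tuple_def)

lemma dimret:
  assumes sub: "k_submodular n k f" and Y: "Y \<in> kset n k" and q: "q \<in> {1..k}" and i: "i \<in> {1..n}"
    and ni: "\<forall>r. i \<notin> Y r"
  shows "rho f q i Y \<le> rho f q i empty_tuple"
proof -
  let ?X = "empty_tuple(q := {i})"
  have X: "?X \<in> kset n k"
  proof (rule kset_intro)
    fix r
    show "r \<in> {1..k} \<Longrightarrow> ?X r \<subseteq> {1..n}" using i by (simp add: empty_tuple_def)
    show "r \<notin> {1..k} \<Longrightarrow> ?X r = {}" using q by (auto simp: empty_tuple_def)
    fix r' show "r \<noteq> r' \<Longrightarrow> ?X r \<inter> ?X r' = {}" by (simp add: empty_tuple_def)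
  qed
  have inf: "kinf ?X Y = empty_tuple"
  proof
    fix r show "kinf ?X Y r = empty_tuple r" using ni by (simp add: kinf_def empty_tuple_def)
  qed
  have disj: "\<And>a b. a \<noteq> b \<Longrightarrow> Y a \<inter> Y b = {}" using kset_disj[OF Y] .
  have "ksup k ?X Y = Y(q := Y q \<union> {i})"
  proof
    fix r
    show "ksup k ?X Y r = (Y(q := Y q \<union> {i})) r"
    proof (cases "r \<in> {1..k}")
      case False
      then have "Y r = {}" using kset_out[OF Y] by blast
      moreover have "r \<noteq> q" using False q by blast
      ultimately show ?thesis by (simp only: ksup_def if_not_P[OF False] fun_upd_other) simp
    next
      case True
      show ?thesis
      proof (cases "r = q")
        case rq: True
        have "(?X r \<union> Y r) - (\<Union>r'\<in>{1..k} - {r}. ?X r' \<union> Y r') = Y q \<union> {i}"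
        proof
          show "(?X r \<union> Y r) - (\<Union>r'\<in>{1..k} - {r}. ?X r' \<union> Y r') \<subseteq> Y q \<union> {i}"
            using rq by (simp add: empty_tuple_def)
          show "Y q \<union> {i} \<subseteq> (?X r \<union> Y r) - (\<Union>r'\<in>{1..k} - {r}. ?X r' \<union> Y r')"
          proof
            fix x assume x: "x \<in> Y q \<union> {i}"
            have "x \<notin> ?X r' \<union> Y r'" if "r' \<in> {1..k} - {r}" for r'
              using that x rq disj[of q r'] ni by (auto simp: empty_tuple_def)
            then show "x \<in> (?X r \<union> Y r) - (\<Union>r'\<in>{1..k} - {r}. ?X r' \<union> Y r')"
              using x rq by (simp add: empty_tuple_def)
          qed
        qed
        then show ?thesis using True rq by (simp add: ksup_def)
      next
        case rq: False
        have "(?X r \<union> Y r) - (\<Union>r'\<in>{1..k} - {r}. ?X r' \<union> Y r') = Y r"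
        proof
          show "(?X r \<union> Y r) - (\<Union>r'\<in>{1..k} - {r}. ?X r' \<union> Y r') \<subseteq> Y r"
            using rq by (simp add: empty_tuple_def)
          show "Y r \<subseteq> (?X r \<union> Y r) - (\<Union>r'\<in>{1..k} - {r}. ?X r' \<union> Y r')"
          proof
            fix x assume x: "x \<in> Y r"
            have "x \<notin> ?X r' \<union> Y r'" if "r' \<in> {1..k} - {r}" for r'
              using that x disj[of r r'] ni by (auto simp: empty_tuple_def)
            then show "x \<in> (?X r \<union> Y r) - (\<Union>r'\<in>{1..k} - {r}. ?X r' \<union> Y r')"
              using x by blast
          qed
        qed
        then show ?thesis using True rq by (simp add: ksup_def)
      qed
    qed
  qed
  moreover have "f ?X + f Y \<ge> f (kinf ?X Y) + f (ksup k ?X Y)"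
    using sub X Y unfolding k_submodular_def by blast
  ultimately show ?thesis using inf unfolding rho_def empty_tuple_def by simp
qed

lemma removal:
  assumes sub: "k_submodular n k f" and T: "T \<in> kset n k" and fin: "finite R"
    and R: "R \<subseteq> {(q,i). q \<in> {1..k} \<and> i \<in> T q}"
  shows "f T - f (\<lambda>q. T q - {i. (q,i) \<in> R}) \<le> (\<Sum>(q,i)\<in>R. rho f q i empty_tuple)"
  using fin R
proof (induction R rule: finite_induct)
  case empty then show ?case by simp
next
  case (insert x R)
  obtain q i where x: "x = (q,i)" by (cases x)
  define Z where "Z = (\<lambda>r. T r - {i'. (r,i') \<in> insert x R})"
  define W where "W = (\<lambda>r. T r - {i'. (r,i') \<in> R})"
  have q: "q \<in> {1..k}" and iT: "i \<in> T q" using insert.prems x by auto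
  have disj: "\<And>a b. a \<noteq> b \<Longrightarrow> T a \<inter> T b = {}" using kset_disj[OF T] by blast
  have "T q \<subseteq> (if q \<in> {1..k} then {1..n} else {})" using T unfolding kset_def by blast
  with q iT have i: "i \<in> {1..n}" by auto
  have WZ: "W = Z(q := Z q \<union> {i})" using insert.hyps(2) x iT unfolding W_def Z_def by (auto simp: fun_eq_iff)
  have Z: "Z \<in> kset n k" using T unfolding Z_def by (rule kset_mono) blast
  have ni: "\<forall>r. i \<notin> Z r" using disj iT x unfolding Z_def by auto
  have "f W - f Z = rho f q i Z" using WZ by (simp add: rho_def)
  also have "\<dots> \<le> rho f q i empty_tuple" using dimret[OF sub Z q i ni] .
  finally have 1: "f W - f Z \<le> rho f q i empty_tuple" .
  have 2: "f T - f W \<le> (\<Sum>(q,i)\<in>R. rho f q i empty_tuple)" using insert W_def by auto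
  have "(\<Sum>(q,i)\<in>insert x R. rho f q i empty_tuple) = rho f q i empty_tuple + (\<Sum>(q,i)\<in>R. rho f q i empty_tuple)"
    using insert.hyps x by simp
  then show ?case using 1 2 unfolding Z_def[symmetric] by linarith
qed


lemma finite_Qfeas: "finite (Qfeas n k D xi X)"
  using finite_kset[of n k] unfolding Qfeas_def by (rule finite_subset[rotated]) auto

lemma prob_le1: assumes "p \<in> prob_dists" shows "p (w::'w::finite) \<le> 1" "0 \<le> p w"
proof -
  have nn: "\<forall>w. 0 \<le> p w" and s: "sum p UNIV = 1" using assms by (auto simp: prob_dists_def)
  show "p w \<le> 1" using member_le_sum[of w UNIV p] nn s by simp
  show "0 \<le> p w" using nn by simp
qed

lemma bdd_lin: assumes "PP \<subseteq> prob_dists"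
  shows "bdd_above ((\<lambda>p. \<Sum>w\<in>UNIV. p (w::'w::finite) * c w) ` PP)"
proof (rule bdd_aboveI2)
  fix p assume "p \<in> PP"
  then have p: "p \<in> prob_dists" using assms by auto
  have "p w * c w \<le> \<bar>c w\<bar>" for w
  proof -
    have "p w * c w \<le> p w * \<bar>c w\<bar>" using prob_le1(2)[OF p] by (simp add: mult_left_mono)
    also have "\<dots> \<le> 1 * \<bar>c w\<bar>" using prob_le1[OF p] by (intro mult_right_mono) auto
    finally show ?thesis by simp
  qed
  then show "(\<Sum>w\<in>UNIV. p w * c w) \<le> (\<Sum>w\<in>UNIV. \<bar>c w\<bar>)" by (intro sum_mono) auto
qed

lemma Q_lower:
  assumes sub: "k_submodular n k f" and Sf: "S \<in> Qfeas n k D xi Y"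
  shows "f S - (\<Sum>q\<in>{1..k}. \<Sum>i\<in>{1..n}. rho f q i empty_tuple * (if i \<in> S q then 1 else 0)
            * (if xi i then 1 else 0) * (if i \<in> X q then 1 else 0)) \<le> Qval n k D xi f X"
proof -
  define R where "R = {x \<in> {1..k} \<times> {1..n}. (case x of (q,i) \<Rightarrow> i \<in> S q \<and> xi i \<and> i \<in> X q)}"
  have S: "S \<in> kset n k" and cS: "\<forall>q\<in>{1..k}. card (S q) \<le> D q" using Sf unfolding Qfeas_def by auto
  have finR: "finite R" unfolding R_def by auto
  have Rsub: "R \<subseteq> {(q,i). q \<in> {1..k} \<and> i \<in> S q}" unfolding R_def by auto
  define S' where "S' = (\<lambda>q. S q - {i. (q,i) \<in> R})"
  have rem: "f S - f S' \<le> (\<Sum>(q,i)\<in>R. rho f q i empty_tuple)"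
    using removal[OF sub S finR Rsub] unfolding S'_def .
  have "(\<Sum>(q,i)\<in>R. rho f q i empty_tuple) = (\<Sum>x\<in>{1..k} \<times> {1..n}.
      if (case x of (q,i) \<Rightarrow> i \<in> S q \<and> xi i \<and> i \<in> X q) then (case x of (q,i) \<Rightarrow> rho f q i empty_tuple) else 0)"
    unfolding R_def by (rule sum.inter_filter) auto
  also have "\<dots> = (\<Sum>(q,i)\<in>{1..k} \<times> {1..n}. rho f q i empty_tuple * (if i \<in> S q then 1 else 0)
            * (if xi i then 1 else 0) * (if i \<in> X q then 1 else 0))"
    by (rule sum.cong[OF refl]) (auto split: prod.splits)
  also have "\<dots> = (\<Sum>q\<in>{1..k}. \<Sum>i\<in>{1..n}. rho f q i empty_tuple * (if i \<in> S q then 1 else 0)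
            * (if xi i then 1 else 0) * (if i \<in> X q then 1 else 0))"
    by (rule sum.cartesian_product[symmetric])
  finally have eq: "(\<Sum>(q,i)\<in>R. rho f q i empty_tuple) = \<dots>" .
  have S'k: "S' \<in> kset n k" using S unfolding S'_def by (rule kset_mono) blast
  have "S' \<in> Qfeas n k D xi X"
  proof -
    have "\<forall>q\<in>{1..k}. \<forall>i\<in>{1..n}. i \<in> S' q \<longrightarrow> \<not> (i \<in> X q \<and> xi i)"
      by (simp add: S'_def R_def, blast)
    moreover have "\<forall>q\<in>{1..k}. card (S' q) \<le> D q"
    proof
      fix q assume q: "q \<in> {1..k}"
      have "finite (S q)" using kset_in[OF S q] finite_subset by blast
      then have "card (S' q) \<le> card (S q)" unfolding S'_def by (intro card_mono) auto
      moreover have "card (S q) \<le> D q" using cS q by blast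
      ultimately show "card (S' q) \<le> D q" by linarith
    qed
    ultimately show ?thesis using S'k unfolding Qfeas_def by blast
  qed
  then have "f S' \<le> Qval n k D xi f X" unfolding Qval_def
    by (intro Max_ge) (auto simp: finite_Qfeas)
  then show ?thesis using rem eq by linarith
qed


lemma cut_valid:
  assumes sub: "\<forall>w. k_submodular n k (f w)" and PPd: "PP \<subseteq> prob_dists" and PPne: "PP \<noteq> {}"
    and Shf: "\<forall>w. Sh j w \<in> Qfeas n k D (xi w) Y" and phj: "ph j \<in> PP"
    and phm: "\<forall>p\<in>PP. (\<Sum>w\<in>UNIV. ph j w * f w (Sh j w)) \<le> (\<Sum>w\<in>UNIV. p w * f w (Sh j w))"
  shows "cutval n k xi f PP ph Sh j X \<le> PhiR n k D xi f PP X"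
proof -
  define g where "g = (\<lambda>w q i. rho (f w) q i empty_tuple * (if i \<in> Sh j w q then 1 else 0)
            * (if xi w i then 1 else 0))"
  define b where "b = (\<lambda>w. \<Sum>q\<in>{1..k}. \<Sum>i\<in>{1..n}. g w q i * (if i \<in> X q then 1 else 0))"
  have Ql: "f w (Sh j w) - b w \<le> Qval n k D (xi w) (f w) X" for w
    using Q_lower[OF sub[rule_format, of w] Shf[rule_format, of w], of X] unfolding b_def g_def .
  show ?thesis unfolding PhiR_def
  proof (rule cINF_greatest[OF PPne])
    fix p assume pP: "p \<in> PP"
    then have pd: "p \<in> prob_dists" using PPd by auto
    have "(\<Sum>w\<in>UNIV. p w * b w) = (\<Sum>q\<in>{1..k}. \<Sum>i\<in>{1..n}. (\<Sum>w\<in>UNIV. p w * g w q i) * (if i \<in> X q then 1 else 0))"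
      unfolding b_def by (simp add: sum_distrib_left sum_distrib_right sum.swap[of _ UNIV] mult.assoc)
    also have "\<dots> \<le> (\<Sum>q\<in>{1..k}. \<Sum>i\<in>{1..n}. cutcoef xi f PP Sh j q i * (if i \<in> X q then 1 else 0))"
    proof (intro sum_mono)
      fix q i
      have "(\<Sum>w\<in>UNIV. p w * g w q i) \<le> cutcoef xi f PP Sh j q i"
        unfolding cutcoef_def
        using cSUP_upper[OF pP bdd_lin[OF PPd, of "\<lambda>w. g w q i"]]
        unfolding g_def by (simp add: mult.assoc)
      then show "(\<Sum>w\<in>UNIV. p w * g w q i) * (if i \<in> X q then 1 else 0)
          \<le> cutcoef xi f PP Sh j q i * (if i \<in> X q then 1 else 0)" by simp
    qed
    finally have bb: "(\<Sum>w\<in>UNIV. p w * b w) \<le> (\<Sum>q\<in>{1..k}. \<Sum>i\<in>{1..n}. cutcoef xi f PP Sh j q i * (if i \<in> X q then 1 else 0))" .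
    have "Phival f ph Sh j \<le> (\<Sum>w\<in>UNIV. p w * f w (Sh j w))"
      using phm pP unfolding Phival_def by blast
    moreover have "(\<Sum>w\<in>UNIV. p w * f w (Sh j w)) - (\<Sum>w\<in>UNIV. p w * b w)
        \<le> (\<Sum>w\<in>UNIV. p w * Qval n k D (xi w) (f w) X)"
    proof -
      have "(\<Sum>w\<in>UNIV. p w * f w (Sh j w)) - (\<Sum>w\<in>UNIV. p w * b w) = (\<Sum>w\<in>UNIV. p w * (f w (Sh j w) - b w))"
        by (simp add: sum_subtractf right_diff_distrib)
      also have "\<dots> \<le> (\<Sum>w\<in>UNIV. p w * Qval n k D (xi w) (f w) X)"
        by (intro sum_mono mult_left_mono Ql prob_le1(2)[OF pd])
      finally show ?thesis .
    qed
    ultimately show "cutval n k xi f PP ph Sh j X \<le> (\<Sum>w\<in>UNIV. p w * Qval n k D (xi w) (f w) X)"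
      using bb unfolding cutval_def by linarith
  qed
qed

lemma cut_self:
  assumes PPne: "PP \<noteq> {}" and Shf: "\<forall>w. Sh j w \<in> Qfeas n k D (xi w) Y"
  shows "cutval n k xi f PP ph Sh j Y = Phival f ph Sh j"
proof -
  have "cutcoef xi f PP Sh j q i * (if i \<in> Y q then 1 else 0) = 0" if q: "q \<in> {1..k}" and i: "i \<in> {1..n}" for q i
  proof (cases "i \<in> Y q")
    case True
    have "(\<Sum>w\<in>UNIV. p w * rho (f w) q i empty_tuple * (if i \<in> Sh j w q then 1 else 0) * (if xi w i then 1 else 0)) = 0" for p
    proof (rule sum.neutral, rule ballI)
      fix w
      have "i \<in> Sh j w q \<longrightarrow> \<not> (i \<in> Y q \<and> xi w i)" using Shf q i unfolding Qfeas_def by blast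
      then show "p w * rho (f w) q i empty_tuple * (if i \<in> Sh j w q then 1 else 0) * (if xi w i then 1 else 0) = 0"
        using True by auto
    qed
    then have "cutcoef xi f PP Sh j q i = 0" unfolding cutcoef_def using PPne by simp
    then show ?thesis by simp
  qed simp
  then have "(\<Sum>q\<in>{1..k}. \<Sum>i\<in>{1..n}. cutcoef xi f PP Sh j q i * (if i \<in> Y q then 1 else 0)) = 0"
    by (intro sum.neutral ballI) simp
  then show ?thesis unfolding cutval_def by simp
qed

lemma phival_eq:
  assumes Shf: "\<forall>w. Sh j w \<in> Qfeas n k D (xi w) Y \<and> (\<forall>S\<in>Qfeas n k D (xi w) Y. f w S \<le> f w (Sh j w))"
    and phj: "ph j \<in> PP"
    and phm: "\<forall>p\<in>PP. (\<Sum>w\<in>UNIV. ph j w * f w (Sh j w)) \<le> (\<Sum>w\<in>UNIV. p w * f w (Sh j w))"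
  shows "PhiR n k D xi f PP Y = Phival f ph Sh j"
proof -
  have Q: "Qval n k D (xi w) (f w) Y = f w (Sh j w)" for w
    unfolding Qval_def using Shf by (intro Max_eqI) (auto simp: finite_Qfeas)
  show ?thesis unfolding PhiR_def Q Phival_def
    by (rule cInf_eq_minimum) (use phj phm in auto)
qed

lemma ub_rep:
  "m \<ge> 1 \<Longrightarrow> \<exists>j\<in>{1..m}. theta_ub f ph Sh m = ereal (Phival f ph Sh j) \<and> xstar f ph Sh xh m = xh j
     \<and> (\<forall>i\<in>{1..m}. Phival f ph Sh j \<le> Phival f ph Sh i)"
proof (induction m)
  case 0 then show ?case by simp
next
  case (Suc m)
  show ?case
  proof (cases "m = 0")
    case True then show ?thesis by simp
  next
    case False
    then obtain j where j: "j \<in> {1..m}" "theta_ub f ph Sh m = ereal (Phival f ph Sh j)"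
      "xstar f ph Sh xh m = xh j" "\<forall>i\<in>{1..m}. Phival f ph Sh j \<le> Phival f ph Sh i"
      using Suc by auto
    have split: "i \<in> {1..Suc m} \<Longrightarrow> i \<in> {1..m} \<or> i = Suc m" for i by auto
    show ?thesis
    proof (cases "Phival f ph Sh (Suc m) < Phival f ph Sh j")
      case True
      have "theta_ub f ph Sh (Suc m) = ereal (Phival f ph Sh (Suc m))" "xstar f ph Sh xh (Suc m) = xh (Suc m)"
        using True j(2) by simp_all
      moreover have "\<forall>i\<in>{1..Suc m}. Phival f ph Sh (Suc m) \<le> Phival f ph Sh i"
        using True j(4) split by fastforce
      ultimately show ?thesis by (intro bexI[of _ "Suc m"]) auto
    next
      case False
      have "theta_ub f ph Sh (Suc m) = ereal (Phival f ph Sh j)" "xstar f ph Sh xh (Suc m) = xh j"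
        using False j(2,3) by simp_all
      moreover have "\<forall>i\<in>{1..Suc m}. Phival f ph Sh j \<le> Phival f ph Sh i"
        using False j(4) split by fastforce
      ultimately show ?thesis using j(1) by (intro bexI[of _ j]) auto
    qed
  qed
qed


lemma finite_Xset: "finite (Xset n k A)"
  using finite_kset[of n k] unfolding Xset_def by (rule finite_subset[rotated]) auto

theorem theorem7:
  fixes n k :: nat and A D :: "nat \<Rightarrow> nat"
    and xi :: "'w::finite \<Rightarrow> nat \<Rightarrow> bool"
    and f :: "'w \<Rightarrow> (nat \<Rightarrow> nat set) \<Rightarrow> real"
    and PP :: "('w \<Rightarrow> real) set" and eps :: real
    and xh :: "nat \<Rightarrow> nat \<Rightarrow> nat set" and Sh :: "nat \<Rightarrow> 'w \<Rightarrow> nat \<Rightarrow> nat set"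
    and ph :: "nat \<Rightarrow> 'w \<Rightarrow> real" and eta :: "nat \<Rightarrow> real"
  assumes "0 < n" and "0 < k" and "0 \<le> eps"
    and "\<forall>w. k_submodular n k (f w)" and "\<forall>w. k_monotone n k (f w)"
    and "PP \<noteq> {}" and "compact PP" and "PP \<subseteq> prob_dists"
    and "valid_run n k A D xi f PP eps xh Sh ph eta"
  shows "\<exists>m. \<not> (theta_ub f ph Sh m - theta_lb eta m > ereal eps) \<and>
             (\<forall>m'<m. theta_ub f ph Sh m' - theta_lb eta m' > ereal eps) \<and>
             xstar f ph Sh xh m \<in> Xset n k A \<and>
             theta_ub f ph Sh m = ereal (PhiR n k D xi f PP (xstar f ph Sh xh m)) \<and>
             PhiR n k D xi f PP (xstar f ph Sh xh m)
               \<le> (MIN X\<in>Xset n k A. PhiR n k D xi f PP X) + eps"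
  
proof -
  define G where "G = (\<lambda>m. theta_ub f ph Sh m - theta_lb eta m > ereal eps)"
  define OK where "OK = iteration_ok n k A D xi f PP xh Sh ph eta"
  have VR1: "xh 1 \<in> Xset n k A" using assms(9) unfolding valid_run_def by auto
  have VR2: "\<And>m. (\<forall>m'\<le>m. G m') \<Longrightarrow> OK (Suc m)"
    using assms(9) unfolding valid_run_def G_def OK_def by auto
  have sub: "\<forall>w. k_submodular n k (f w)" and PPd: "PP \<subseteq> prob_dists" and PPne: "PP \<noteq> {}"
    using assms by auto
  have OKD: "(\<forall>w. Sh L w \<in> Qfeas n k D (xi w) (xh L) \<and>
          (\<forall>S\<in>Qfeas n k D (xi w) (xh L). f w S \<le> f w (Sh L w))) \<and>
     ph L \<in> PP \<and>
     (\<forall>p\<in>PP. (\<Sum>w\<in>UNIV. ph L w * f w (Sh L w)) \<le> (\<Sum>w\<in>UNIV. p w * f w (Sh L w))) \<and>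
     xh (Suc L) \<in> Xset n k A \<and>
     (\<forall>j\<in>{1..L}. cutval n k xi f PP ph Sh j (xh (Suc L)) \<le> eta L) \<and>
     (\<forall>X\<in>Xset n k A. \<forall>e::real. (\<forall>j\<in>{1..L}. cutval n k xi f PP ph Sh j X \<le> e) \<longrightarrow> eta L \<le> e)"
    if "OK L" for L using that unfolding OK_def iteration_ok_def by blast
  have G0: "G 0" by (simp add: G_def)
  have lbS: "theta_lb eta L = ereal (eta L)" if "L \<ge> 1" for L
    using that by (cases L) auto
  have cutL: "\<not> G L" if oL: "OK L" and i: "i \<in> {1..L}" and oi: "OK i" and e: "xh (Suc L) = xh i" for L i
  proof
    assume g: "G L"
    have L1: "L \<ge> 1" using i by auto
    have "cutval n k xi f PP ph Sh i (xh i) = Phival f ph Sh i"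
      using cut_self[OF PPne] OKD[OF oi] by blast
    moreover have "cutval n k xi f PP ph Sh i (xh (Suc L)) \<le> eta L" using OKD[OF oL] i by blast
    moreover obtain j0 where "theta_ub f ph Sh L = ereal (Phival f ph Sh j0)"
      "\<forall>i\<in>{1..L}. Phival f ph Sh j0 \<le> Phival f ph Sh i"
      using ub_rep[OF L1, of f ph Sh xh] by blast
    moreover have "Phival f ph Sh j0 - eta L > eps" using g lbS[OF L1] calculation(3) unfolding G_def by simp
    moreover have "Phival f ph Sh j0 \<le> Phival f ph Sh i" using calculation(4) i by blast
    ultimately show False using e assms(3) by simp
  qed
  have ex: "\<exists>m. \<not> G m"
  proof (rule ccontr)
    assume "\<not> ?thesis"
    then have allG: "\<forall>m. G m" by auto
    have ok: "OK L" if L1: "L \<ge> 1" for L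
    proof -
      obtain L' where "L = Suc L'" using L1 by (cases L) auto
      then show ?thesis using VR2[of L'] allG by auto
    qed
    have inX: "xh L \<in> Xset n k A" if L1: "L \<ge> 1" for L
    proof (cases "L = 1")
      case True then show ?thesis using VR1 by simp
    next
      case False
      then obtain L' where L': "L = Suc L'" "L' \<ge> 1" using L1 by (cases L) auto
      then show ?thesis using OKD[OF ok[OF L'(2)]] by auto
    qed
    define N where "N = card (Xset n k A)"
    have "\<not> inj_on xh {1..N+1}"
    proof
      assume "inj_on xh {1..N+1}"
      moreover have "xh ` {1..N+1} \<subseteq> Xset n k A" using inX by auto
      ultimately have "card {1..N+1} \<le> card (Xset n k A)"
        using card_inj_on_le finite_Xset by blast
      then show False unfolding N_def by simp
    qed
    then obtain a b where ab: "a \<in> {1..N+1}" "b \<in> {1..N+1}" "a \<noteq> b" "xh a = xh b"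
      unfolding inj_on_def by blast
    obtain i j where ij: "1 \<le> i" "i < j" "xh i = xh j"
    proof (cases "a < b")
      case True then show ?thesis using ab that by auto
    next
      case False then show ?thesis using ab that[of b a] by auto
    qed
    then obtain L where L: "j = Suc L" "i \<in> {1..L}" by (cases j) auto
    have L1: "L \<ge> 1" using L by auto
    have "xh (Suc L) = xh i" using ij(3) L(1) by simp
    then have "\<not> G L" using cutL[OF ok[OF L1] L(2) ok[OF ij(1)]] by simp
    then show False using allG by auto
  qed
  define m where "m = (LEAST m. \<not> G m)"
  have nG: "\<not> G m" unfolding m_def using ex by (rule LeastI_ex)
  have lt: "\<forall>m'<m. G m'" unfolding m_def using not_less_Least by blast
  have m1: "m \<ge> 1" using nG G0 by (cases m) auto
  have okm: "OK L" if Lm: "L \<in> {1..m}" for L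
  proof -
    obtain L' where "L = Suc L'" using Lm by (cases L) auto
    then show ?thesis using VR2[of L'] lt Lm by auto
  qed
  have inXm: "xh L \<in> Xset n k A" if Lm: "L \<in> {1..m}" for L
  proof (cases "L = 1")
    case True then show ?thesis using VR1 by simp
  next
    case False
    then obtain L' where L': "L = Suc L'" "L' \<in> {1..m}" using Lm by (cases L) auto
    then show ?thesis using OKD[OF okm[OF L'(2)]] by auto
  qed
  obtain j where j: "j \<in> {1..m}" "theta_ub f ph Sh m = ereal (Phival f ph Sh j)"
      "xstar f ph Sh xh m = xh j"
    using ub_rep[OF m1, of f ph Sh xh] by blast
  have PhiEq: "PhiR n k D xi f PP (xh j) = Phival f ph Sh j"
    using OKD[OF okm[OF j(1)]] by (intro phival_eq) blast+
  have gapm: "Phival f ph Sh j - eta m \<le> eps"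
    using nG j(2) lbS[OF m1] unfolding G_def by auto
  have etab: "eta m \<le> PhiR n k D xi f PP X" if X: "X \<in> Xset n k A" for X
  proof -
    have "\<forall>j'\<in>{1..m}. cutval n k xi f PP ph Sh j' X \<le> PhiR n k D xi f PP X"
    proof
      fix j' assume j': "j' \<in> {1..m}"
      show "cutval n k xi f PP ph Sh j' X \<le> PhiR n k D xi f PP X"
        using OKD[OF okm[OF j']] by (intro cut_valid[OF sub PPd PPne]) blast+
    qed
    then show ?thesis using OKD[OF okm[of m]] m1 X by auto
  qed
  have fin: "finite ((\<lambda>X. PhiR n k D xi f PP X) ` Xset n k A)" using finite_Xset by auto
  have ne: "(\<lambda>X. PhiR n k D xi f PP X) ` Xset n k A \<noteq> {}" using VR1 by auto
  obtain X0 where X0: "X0 \<in> Xset n k A" "(MIN X\<in>Xset n k A. PhiR n k D xi f PP X) = PhiR n k D xi f PP X0"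
    using Min_in[OF fin ne] by auto
  show ?thesis
  proof (intro exI[of _ m] conjI)
    show "\<not> ereal eps < theta_ub f ph Sh m - theta_lb eta m" using nG unfolding G_def .
    show "\<forall>m'<m. ereal eps < theta_ub f ph Sh m' - theta_lb eta m'" using lt unfolding G_def .
    show "xstar f ph Sh xh m \<in> Xset n k A" using j(3) inXm[OF j(1)] by simp
    show "theta_ub f ph Sh m = ereal (PhiR n k D xi f PP (xstar f ph Sh xh m))"
      using j(2,3) PhiEq by simp
    show "PhiR n k D xi f PP (xstar f ph Sh xh m) \<le> (MIN X\<in>Xset n k A. PhiR n k D xi f PP X) + eps"
      using j(3) PhiEq gapm etab[OF X0(1)] X0(2) by simp
  qed
qed

end
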